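(* Let $a>1$ be a real number and let $G$ be a connected $(n,m)$-graph. If $G$ has maximum value of $SEI_a$ among all connected $(n,m)$-graphs, then the maximum vertex degree in $G$ is $n-1$.
   Context: All graphs are finite, simple, undirected and connected; an $(n,m)$-graph has $n$ vertices and $m$ edges. The variable sum exdeg index is $SEI_a(G)=\sum_{uv\in E(G)}(a^{d_u}+a^{d_v})$, where $d_u$ is the degree of vertex $u$. *)

theory Defs
  imports Complex_Main
begin

definition simple_graph :: "'a set \<Rightarrow> 'a set set \<Rightarrow> bool" where
  "simple_graph V E \<longleftrightarrow> finite V \<and> (\<forall>e\<in>E. e \<subseteq> V \<and> card e = 2)"

definition adj :: "'a set set \<Rightarrow> 'a \<Rightarrow> 'a \<Rightarrow> bool" where
  "adj E u v \<longleftrightarrow> {u, v} \<in> E"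

definition connected_graph :: "'a set \<Rightarrow> 'a set set \<Rightarrow> bool" where
  "connected_graph V E \<longleftrightarrow> simple_graph V E \<and> V \<noteq> {} \<and>
     (\<forall>u\<in>V. \<forall>v\<in>V. (adj E)\<^sup>*\<^sup>* u v)"

definition degree :: "'a set set \<Rightarrow> 'a \<Rightarrow> nat" where
  "degree E v = card {e \<in> E. v \<in> e}"

definition max_degree :: "'a set \<Rightarrow> 'a set set \<Rightarrow> nat" where
  "max_degree V E = Max (degree E ` V)"

definition SEI :: "real \<Rightarrow> 'a set set \<Rightarrow> real" where
  "SEI a E = (\<Sum>e\<in>E. \<Sum>v\<in>e. a ^ degree E v)"

end

theory Submission
  imports Defs
begin

lemma sg_finite: "simple_graph V E \<Longrightarrow> finite E"
  unfolding simple_graph_def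
  by (meson PowI finite_Pow_iff finite_subset subsetI)

lemma sei_vertex:
  assumes "simple_graph V E"
  shows "SEI a E = (\<Sum>u\<in>V. real (degree E u) * a ^ degree E u)"
proof -
  have fE: "finite E" using sg_finite[OF assms] .
  have fV: "finite V" using assms by (simp add: simple_graph_def)
  define g where "g u = a ^ degree E u" for u
  have "SEI a E = (\<Sum>e\<in>E. \<Sum>u\<in>e. g u)" by (simp add: SEI_def g_def)
  also have "\<dots> = (\<Sum>e\<in>E. \<Sum>u\<in>V. if u \<in> e then g u else 0)"
  proof (rule sum.cong[OF refl])
    fix e assume "e \<in> E"
    then have "e \<subseteq> V" using assms by (simp add: simple_graph_def)
    then have "e = {u\<in>V. u \<in> e}" by blast
    then show "(\<Sum>u\<in>e. g u) = (\<Sum>u\<in>V. if u \<in> e then g u else 0)"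
      using sum.inter_filter[OF fV, of g "\<lambda>u. u \<in> e"] by simp
  qed
  also have "\<dots> = (\<Sum>u\<in>V. \<Sum>e\<in>E. if u \<in> e then g u else 0)" by (rule sum.swap)
  also have "\<dots> = (\<Sum>u\<in>V. real (degree E u) * g u)"
  proof (rule sum.cong[OF refl])
    fix u assume "u \<in> V"
    show "(\<Sum>e\<in>E. if u \<in> e then g u else 0) = real (degree E u) * g u"
      using sum.inter_filter[OF fE, of "\<lambda>_. g u" "\<lambda>e. u \<in> e"]
      by (simp add: degree_def)
  qed
  finally show ?thesis by (simp add: g_def)
qed

lemma incr_mono:
  fixes a :: real
  assumes "a > 1" "j < k"
  shows "real (Suc j) * a ^ Suc j - real j * a ^ j < real (Suc k) * a ^ Suc k - real k * a ^ k"
proof -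
  have e: "real (Suc n) * a ^ Suc n - real n * a ^ n = a ^ n * (real n * (a - 1) + a)" for n
    by (simp add: algebra_simps)
  have "a ^ j < a ^ k" using assms by (simp add: power_strict_increasing)
  moreover have "real j * (a - 1) + a \<le> real k * (a - 1) + a"
    using assms by (simp add: mult_right_mono)
  moreover have "0 < real j * (a - 1) + a" using assms by (simp add: add_nonneg_pos)
  moreover have "0 \<le> a ^ j" using assms by simp
  ultimately have "a ^ j * (real j * (a - 1) + a) < a ^ k * (real k * (a - 1) + a)"
    by (intro mult_strict_mono) (use assms in auto)
  then show ?thesis by (simp only: e)
qed

lemma degree_nbrs:
  assumes "simple_graph V E"
  shows "degree E v = card {u. {v, u} \<in> E}"
proof -
  have "bij_betw (\<lambda>u. {v, u}) {u. {v, u} \<in> E} {e \<in> E. v \<in> e}"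
  proof (rule bij_betwI')
    fix x y show "({v, x} = {v, y}) = (x = y)" by (metis doubleton_eq_iff)
  next
    fix x assume "x \<in> {u. {v, u} \<in> E}" then show "{v, x} \<in> {e \<in> E. v \<in> e}" by simp
  next
    fix e assume "e \<in> {e \<in> E. v \<in> e}"
    then have "e \<in> E" "v \<in> e" by auto
    then have "card e = 2" using assms by (simp add: simple_graph_def)
    then obtain p q where "e = {p, q}" "p \<noteq> q" by (meson card_2_iff)
    with \<open>v \<in> e\<close> have "\<exists>u. e = {v, u}" by auto
    then show "\<exists>x\<in>{u. {v, u} \<in> E}. e = {v, x}" using \<open>e \<in> E\<close> by auto
  qed
  then show ?thesis unfolding degree_def by (metis bij_betw_same_card)
qed

lemma nbrs_sub:
  assumes "simple_graph V E" "v \<in> V"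
  shows "{u. {v, u} \<in> E} \<subseteq> V - {v}"
proof
  fix u assume "u \<in> {u. {v, u} \<in> E}"
  then have "{v,u} \<in> E" by simp
  then have "{v,u} \<subseteq> V" "card {v,u} = 2" using assms by (auto simp: simple_graph_def)
  then show "u \<in> V - {v}" by (cases "u = v") auto
qed

lemma degree_le:
  assumes "simple_graph V E" "v \<in> V"
  shows "degree E v \<le> card V - 1"
proof -
  have fV: "finite V" using assms by (simp add: simple_graph_def)
  have "card {u. {v, u} \<in> E} \<le> card (V - {v})"
    by (rule card_mono) (use fV nbrs_sub[OF assms] in auto)
  then show ?thesis using degree_nbrs[OF assms(1)] assms(2) fV by simp
qed

lemma reach:
  assumes "(adj E)\<^sup>*\<^sup>* v b" "simple_graph V E"
  shows "b \<in> insert v {u. {v, u} \<in> E} \<or>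
    (\<exists>x w. {v, x} \<in> E \<and> w \<notin> insert v {u. {v, u} \<in> E} \<and> {x, w} \<in> E)"
  using assms(1)
proof (induction rule: rtranclp_induct)
  case base then show ?case by simp
next
  case (step b c)
  show ?case
  proof (cases "b \<in> insert v {u. {v, u} \<in> E}")
    case True
    show ?thesis
    proof (cases "b = v")
      case True then show ?thesis using step(2) by (simp add: adj_def)
    next
      case False
      then have "{v,b} \<in> E" using \<open>b \<in> insert v {u. {v, u} \<in> E}\<close> by simp
      then show ?thesis using step(2) by (auto simp: adj_def)
    qed
  next
    case False then show ?thesis using step(3) by blast
  qed
qed

theorem corollary5:
  fixes a :: real and V :: "'a set" and E :: "'a set set"
  assumes "a > 1"
    and "connected_graph V E"
    and "\<And>V' E' :: 'a set set. connected_graph V' E' \<Longrightarrow> card V' = card V \<Longrightarrow>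
           card E' = card E \<Longrightarrow> SEI a E' \<le> SEI a E"
  shows "max_degree V E = card V - 1"
proof -
  have sg: "simple_graph V E" and ne: "V \<noteq> {}" and conn: "\<forall>u\<in>V. \<forall>v\<in>V. (adj E)\<^sup>*\<^sup>* u v"
    using assms(2) by (auto simp: connected_graph_def)
  have fV: "finite V" using sg by (simp add: simple_graph_def)
  have fE: "finite E" using sg_finite[OF sg] .
  have sub: "\<And>e. e \<in> E \<Longrightarrow> e \<subseteq> V" and c2: "\<And>e. e \<in> E \<Longrightarrow> card e = 2"
    using sg by (auto simp: simple_graph_def)
  have "Max (degree E ` V) \<in> degree E ` V" using Max_in[of "degree E ` V"] fV ne by auto
  then obtain v where vV: "v \<in> V" and vmax: "max_degree V E = degree E v"
    unfolding max_degree_def by auto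
  have dmax: "\<And>u. u \<in> V \<Longrightarrow> degree E u \<le> degree E v"
    using vmax fV unfolding max_degree_def by (metis Max_ge finite_imageI imageI)
  have le: "degree E v \<le> card V - 1" using degree_le[OF sg vV] .
  show ?thesis
  proof (rule ccontr)
    assume "max_degree V E \<noteq> card V - 1"
    then have lt: "degree E v < card V - 1" using le vmax by simp
    define N where "N = {u. {v, u} \<in> E}"
    have "card N < card (V - {v})" using lt degree_nbrs[OF sg, of v] vV fV
      by (simp add: N_def)
    then obtain u where "u \<in> V - {v}" "u \<notin> N"
    proof -
      have "finite N" using nbrs_sub[OF sg vV] fV unfolding N_def by (meson finite_Diff finite_subset)
      then have "\<not> (V - {v} \<subseteq> N)" using \<open>card N < card (V - {v})\<close>
        by (meson card_mono not_le)
      then show ?thesis using that by blast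
    qed
    then have "u \<notin> insert v N" by simp
    with reach[OF _ sg] conn vV \<open>u \<in> V - {v}\<close> obtain x w where
      vx: "{v, x} \<in> E" and wN: "w \<notin> insert v N" and xw: "{x, w} \<in> E"
      unfolding N_def by blast
    have vw: "{v, w} \<notin> E" "w \<noteq> v" using wN by (auto simp: N_def)
    have xv: "x \<noteq> v" using c2[OF vx] by (cases "x = v") auto
    have xw2: "x \<noteq> w" using c2[OF xw] by (cases "x = w") auto
    have xV: "x \<in> V" and wV: "w \<in> V" using sub[OF vx] sub[OF xw] by auto
    define E' where "E' = insert {v, w} (E - {{x, w}})"
    have sg': "simple_graph V E'"
      using sg vV wV vw(2) by (auto simp: simple_graph_def E'_def)
    have cardE': "card E' = card E"
    proof -
      have "card E > 0" using fE xw card_gt_0_iff by blast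
      then show ?thesis using fE xw vw(1) by (simp add: E'_def card_Diff_singleton)
    qed
    have estep: "(adj E')\<^sup>*\<^sup>* p q" if "adj E p q" for p q
    proof (cases "{p, q} = {x, w}")
      case True
      have a1: "adj E' x v" "adj E' v x" "adj E' v w" "adj E' w v"
        using vx vw(2) xv
        by (auto simp: adj_def E'_def insert_commute doubleton_eq_iff)
      have "(adj E')\<^sup>*\<^sup>* x w" "(adj E')\<^sup>*\<^sup>* w x"
        using a1 by (meson r_into_rtranclp rtranclp_trans)+
      then show ?thesis using True by (auto simp: doubleton_eq_iff)
    next
      case False
      then have "adj E' p q" using that by (simp add: adj_def E'_def)
      then show ?thesis by (rule r_into_rtranclp)
    qed
    have conn': "\<forall>p\<in>V. \<forall>q\<in>V. (adj E')\<^sup>*\<^sup>* p q"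
    proof (intro ballI)
      fix p q assume "p \<in> V" "q \<in> V"
      then have "(adj E)\<^sup>*\<^sup>* p q" using conn by blast
      then show "(adj E')\<^sup>*\<^sup>* p q"
      proof (induction rule: rtranclp_induct)
        case base then show ?case by simp
      next
        case (step b c) then show ?case using estep[of b c] by (meson rtranclp_trans)
      qed
    qed
    have cg': "connected_graph V E'" using sg' ne conn' by (simp add: connected_graph_def)
    have hle: "SEI a E' \<le> SEI a E" using assms(3)[OF cg' refl cardE'] .
    have dv: "degree E' v = Suc (degree E v)"
    proof -
      have "{e \<in> E'. v \<in> e} = insert {v, w} {e \<in> E. v \<in> e}"
        using xv vw(2) by (auto simp: E'_def doubleton_eq_iff)
      moreover have "finite {e \<in> E. v \<in> e}" using fE by simp
      ultimately show ?thesis using vw(1) by (simp add: degree_def)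
    qed
    have dx: "degree E' x = degree E x - 1"
    proof -
      have "x \<notin> {v, w}" using xv xw2 by simp
      then have "{e \<in> E'. x \<in> e} = {e \<in> E. x \<in> e} - {{x, w}}"
        unfolding E'_def by blast
      moreover have "{x, w} \<in> {e \<in> E. x \<in> e}" using xw by simp
      moreover have "finite {e \<in> E. x \<in> e}" using fE by simp
      ultimately show ?thesis by (simp add: degree_def)
    qed
    have dx1: "degree E x \<ge> 1"
    proof -
      have "{x, w} \<in> {e \<in> E. x \<in> e}" using xw by simp
      then have "{e \<in> E. x \<in> e} \<noteq> {}" by blast
      then show ?thesis using fE by (simp add: degree_def card_gt_0_iff Suc_le_eq)
    qed
    have dw: "degree E' w = degree E w"
    proof -
      have eq: "{e \<in> E'. w \<in> e} = insert {v, w} ({e \<in> E. w \<in> e} - {{x, w}})"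
        by (auto simp: E'_def)
      have f: "finite {e \<in> E. w \<in> e}" using fE by simp
      have m: "{x, w} \<in> {e \<in> E. w \<in> e}" using xw by simp
      have "card {e \<in> E'. w \<in> e} = Suc (card {e \<in> E. w \<in> e} - 1)"
        unfolding eq using f vw(1) card_Diff_singleton[OF m] by simp
      moreover have "card {e \<in> E. w \<in> e} \<ge> 1" using f m
        by (metis card_0_eq empty_iff less_one not_less)
      ultimately show ?thesis by (simp add: degree_def)
    qed
    have doth: "degree E' u = degree E u" if "u \<noteq> v" "u \<noteq> x" "u \<noteq> w" for u
    proof -
      have "{e \<in> E'. u \<in> e} = {e \<in> E. u \<in> e}" using that by (auto simp: E'_def)
      then show ?thesis by (simp add: degree_def)
    qed
    define f where "f k = real k * a ^ k" for k
    define h where "h u = f (degree E' u) - f (degree E u)" for u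
    have "SEI a E' - SEI a E = (\<Sum>u\<in>V. h u)"
      by (simp add: sei_vertex[OF sg] sei_vertex[OF sg'] h_def f_def sum_subtractf)
    also have "\<dots> = (\<Sum>u\<in>{v, x}. h u)"
    proof (rule sum.mono_neutral_right)
      show "finite V" by (rule fV)
      show "{v, x} \<subseteq> V" using vV xV by simp
      show "\<forall>i\<in>V - {v, x}. h i = 0"
      proof
        fix i assume "i \<in> V - {v, x}"
        then have "i \<noteq> v" "i \<noteq> x" by auto
        then have "degree E' i = degree E i" using dw doth by (cases "i = w") auto
        then show "h i = 0" by (simp add: h_def)
      qed
    qed
    also have "\<dots> = h v + h x" using xv by simp
    finally have diff: "SEI a E' - SEI a E = h v + h x" .
    obtain j where j: "degree E x = Suc j" using dx1 not0_implies_Suc by fastforce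
    have jlt: "j < degree E v" using dmax[OF xV] j by simp
    have "f (Suc j) - f j < f (Suc (degree E v)) - f (degree E v)"
      unfolding f_def using incr_mono[OF assms(1) jlt] .
    then have "h v + h x > 0" unfolding h_def using dv dx j by simp
    with diff hle show False by simp
  qed
qed

end
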